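(* Let $\psi$ be a bounded complexity measure, let $k\in\omega\setminus\{0,1\}$, and let $A$ be a nontrivial closed class of decision tables from $\mathcal{M}_k^\infty$. Then the function $\mathcal{H}^\infty_{\psi,A}$ is everywhere defined (i.e. defined for every $n\in\omega$) if and only if the function $L_{\psi,A}$ is everywhere defined.
   Context: Notation: $\omega=\{0,1,2,\dots\}$; $\mathcal P(\omega)$ is the set of nonempty finite subsets of $\omega$; for $k\in\omega\setminus\{0,1\}$, $E_k=\{0,1,\dots,k-1\}$. $P=\{f_i:i\in\omega\}$ is a set of attributes, $f_i\neq f_j$ for $i\ne j$. Decision tables: $\mathcal M_k^\infty$ is the set of rectangular tables filled with numbers from $E_k$, whose columns are labeled with pairwise different attributes from $P$, whose rows are pairwise different, and each row of which is labeled with a set from $\mathcal P(\omega)$ (its set of decisions). The empty table (no rows) is denoted $\Lambda$ and belongs to $\mathcal M_k^\infty$. For $T\in\mathcal M_k^\infty$: $\Delta(T)$ is the set of rows; $\Pi(T)$ is the intersection of the decision sets of all rows (common decisions); $\mathcal M_k^{\infty c}$ is the set of tables having at least one common decision, and $\Lambda\in\mathcal M_k^{\infty c}$; $\mathrm{At}(T)$ is the set of attributes labeling columns; $W(T)=|\mathrm{At}(T)|$; $N(T)$ is the number of rows. For nonempty $T$, $\Omega_k(T)$ is the set of finite words (including the empty word $\lambda$) over the alphabet $\{(f_i,\delta):f_i\in\mathrm{At}(T),\delta\in E_k\}$; for $\alpha=(f_{i_1},\delta_1)\cdots(f_{i_m},\delta_m)$, $T\alpha$ is the subtable of $T$ consisting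 of the rows having value $\delta_j$ in the column $f_{i_j}$ for all $j$, and $T\lambda=T$. Operations: for $D\subseteq\mathrm{At}(T)$, $I(D,T)$ is obtained from $T$ by deleting the columns labeled with attributes from $D$ and, in each group of rows coinciding on the remaining columns, keeping only the first row (with its decision set); $I(\mathrm{At}(T),T)=\Lambda$. For $\nu:E_k^{|\mathrm{At}(T)|}\to\mathcal P(\omega)$, $J(\nu,T)$ is obtained by replacing the decision set of each row $\bar\delta$ by $\nu(\bar\delta)$. $[T]=\{J(\nu,I(D,T)):D\subseteq\mathrm{At}(T),\ \nu:E_k^{|\mathrm{At}(T)\setminus D|}\to\mathcal P(\omega)\}$; for nonempty $A\subseteq\mathcal M_k^\infty$, $[A]=\bigcup_{T\in A}[T]$. $A$ is a closed class if $[A]=A$; it is nontrivial if it contains a nonempty table. Decision trees: a $k$-decision tree is a finite directed rooted tree with at least two nodes in which the root and the edges leaving the root are unlabeled, each terminal node is labeled with a decision from $\omega$, and each other node is labeled with an attribute from $P$, each edge leaving such a node being labeled with a number from $E_k$. $\mathrm{At}(\Gamma)$ is the set of attributes labeling nodes of $\Gamma$. For a complete path $\tau=v_1,d_1,\dots,v_m,d_m,v_{m+1}$ (from the root $v_1$ to a terminal node $v_{m+1}$), $\pi(\tau)=\lambda$ if $m=1$, and otherwise $\pi(\tau)=(f_{i_2},\delta_2)\cdots(f_{i_m},\delta_m)$ where $v_j$ is labeled $f_{i_j}$ and $d_j$ is labeled $\delta_j$; $T(\tau)=T\pi(\tau)$. For $T\ne\Lambda$, a nondeterministic decision tree for $T$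 is a $k$-decision tree $\Gamma$ with $\mathrm{At}(\Gamma)\subseteq\mathrm{At}(T)$ such that every row of $T$ belongs to $T(\tau)$ for some complete path $\tau$, and for every complete path $\tau$ either $T(\tau)=\Lambda$ or the decision at the terminal node of $\tau$ belongs to $\Pi(T(\tau))$. A deterministic decision tree for $T$ is a nondeterministic decision tree for $T$ in which, additionally, exactly one edge leaves the root and the edges leaving any node that is neither the root nor terminal are labeled with pairwise different numbers. Complexity measures: a partially bounded complexity measure is a function $\psi:P^*\to\omega$ on finite words over the alphabet $P$ such that for all words $\alpha_1,\alpha_2$: $\psi(\alpha_1)=0$ iff $\alpha_1=\lambda$; $\psi(\alpha_1)$ is invariant under permutation of the letters of $\alpha_1$; $\psi(\alpha_1)\le\psi(\alpha_1\alpha_2)$; $\psi(\alpha_1\alpha_2)\le\psi(\alpha_1)+\psi(\alpha_2)$. It is a bounded complexity measure if in addition $\psi(\alpha)\ge|\alpha|$ for every word $\alpha$. The depth is $h(\alpha)=|\alpha|$. $\psi$ is extended to finite sets by $\psi(\emptyset)=0$, $\psi(\{f_{i_1},\dots,f_{i_m}\})=\psi(f_{i_1}\cdots f_{i_m})$, and to words $(f_{i_1},\delta_1)\cdots(f_{i_m},\delta_m)$ by $\psi(f_{i_1}\cdots f_{i_m})$ ($\psi(\lambda)=0$). For a $k$-decision tree $\Gamma$, $\psi(\Gamma)=\max_\tau\psi(\pi(\tau))$ over complete paths $\tau$. For $T\ne\Lambda$, $\psi^d(T)$ (resp. $\psi^a(T)$) is the minimum of $\psi(\Gamma)$ over deterministic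 (resp. nondeterministic) decision trees $\Gamma$ for $T$; $\psi^d(\Lambda)=\psi^a(\Lambda)=0$. Further definitions: for $T\ne\Lambda$ and $n\in\omega$, $\Omega_k^n(T)=\{\alpha\in\Omega_k(T):\psi(\alpha)\le n\}$. A finite set $U\subseteq\Omega_k^n(T)$ is a $(\psi,n)$-cover of $T$ if $\bigcup_{\alpha\in U}\Delta(T\alpha)=\Delta(T)$; it is irreducible if no proper subset of $U$ is a $(\psi,n)$-cover of $T$. $l_\psi(T,n)$ is the maximum cardinality of an irreducible $(\psi,n)$-cover of $T$, and $l_\psi(\Lambda,n)=0$. For a class $A$: $L_{\psi,A}(n)$ is undefined if the set $\{l_\psi(T,n):T\in A\}$ is infinite, and otherwise equals its maximum. $\mathcal H^\infty_{\psi,A}(n)$ is undefined if the set $\{\psi^d(T):T\in A,\ \psi^a(T)\le n\}$ is infinite, and otherwise equals its maximum. *)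

theory Defs
  imports Main "HOL-Library.Multiset"
begin

text \<open>Attribute f_i is identified with the natural number i.
  A table is a pair (column labels, rows); each row is a pair (tuple of values, decision set).\<close>

type_synonym table = "nat list \<times> (nat list \<times> nat set) list"

definition empty_table :: table where
  "empty_table = ([], [])"

definition At :: "table \<Rightarrow> nat set" where
  "At T = set (fst T)"

definition Rows :: "table \<Rightarrow> (nat list \<times> nat set) set" where
  "Rows T = set (snd T)"

definition valid_table :: "nat \<Rightarrow> table \<Rightarrow> bool" where
  "valid_table k T \<longleftrightarrow>
     distinct (fst T) \<and> distinct (map fst (snd T)) \<and>
     (\<forall>(r, D) \<in> set (snd T). length r = length (fst T) \<and> (\<forall>v\<in>set r. v < k)
                              \<and> finite D \<and> D \<noteq> {}) \<and>
     (snd T = [] \<longleftrightarrow> fst T = [])"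

definition M_inf :: "nat \<Rightarrow> table set" where
  "M_inf k = {T. valid_table k T}"

definition Pi_dec :: "table \<Rightarrow> nat set" where
  "Pi_dec T = (\<Inter>(r, D) \<in> set (snd T). D)"

definition row_matches :: "nat list \<Rightarrow> nat list \<Rightarrow> (nat \<times> nat) list \<Rightarrow> bool" where
  "row_matches as r \<alpha> \<longleftrightarrow> (\<forall>(f, \<delta>) \<in> set \<alpha>. map_of (zip as r) f = Some \<delta>)"

definition sub :: "table \<Rightarrow> (nat \<times> nat) list \<Rightarrow> table" where
  "sub T \<alpha> = (let rs = filter (\<lambda>(r, D). row_matches (fst T) r \<alpha>) (snd T)
               in if rs = [] then empty_table else (fst T, rs))"

definition Omega :: "nat \<Rightarrow> table \<Rightarrow> (nat \<times> nat) list set" where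
  "Omega k T = {\<alpha>. \<forall>(f, \<delta>) \<in> set \<alpha>. f \<in> At T \<and> \<delta> < k}"

fun dedup :: "('a \<times> 'b) list \<Rightarrow> ('a \<times> 'b) list" where
  "dedup [] = []"
| "dedup ((r, d) # xs) = (r, d) # dedup (filter (\<lambda>(r', _). r' \<noteq> r) xs)"

definition proj :: "nat set \<Rightarrow> nat list \<Rightarrow> nat list \<Rightarrow> nat list" where
  "proj D as r = map snd (filter (\<lambda>(a, v). a \<notin> D) (zip as r))"

definition I_op :: "nat set \<Rightarrow> table \<Rightarrow> table" where
  "I_op D T = (if set (fst T) \<subseteq> D then empty_table
               else (filter (\<lambda>a. a \<notin> D) (fst T),
                     dedup (map (\<lambda>(r, d). (proj D (fst T) r, d)) (snd T))))"

definition J_op :: "(nat list \<Rightarrow> nat set) \<Rightarrow> table \<Rightarrow> table" where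
  "J_op \<nu> T = (fst T, map (\<lambda>(r, d). (r, \<nu> r)) (snd T))"

definition closure1 :: "nat \<Rightarrow> table \<Rightarrow> table set" where
  "closure1 k T = {J_op \<nu> (I_op D T) | D \<nu>. D \<subseteq> At T \<and>
      (\<forall>t. length t = card (At T - D) \<and> (\<forall>v\<in>set t. v < k) \<longrightarrow> finite (\<nu> t) \<and> \<nu> t \<noteq> {})}"

definition closure :: "nat \<Rightarrow> table set \<Rightarrow> table set" where
  "closure k A = (\<Union>T\<in>A. closure1 k T)"

definition closed_class :: "nat \<Rightarrow> table set \<Rightarrow> bool" where
  "closed_class k A \<longleftrightarrow> A \<noteq> {} \<and> A \<subseteq> M_inf k \<and> closure k A = A"

definition nontrivial_class :: "table set \<Rightarrow> bool" where
  "nontrivial_class A \<longleftrightarrow> (\<exists>T\<in>A. T \<noteq> empty_table)"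

text \<open>A subtree below the (unlabeled) root: a terminal node labeled with a decision,
  or a node labeled with an attribute together with its outgoing edges (label, child).
  A k-decision tree is the nonempty list of subtrees hanging from the root.\<close>
datatype dtree = Leaf nat | Node nat "(nat \<times> dtree) list"

type_synonym ktree = "dtree list"

inductive wf_sub :: "nat \<Rightarrow> dtree \<Rightarrow> bool" for k :: nat where
  "wf_sub k (Leaf d)"
| "es \<noteq> [] \<Longrightarrow> (\<And>\<delta> c. (\<delta>, c) \<in> set es \<Longrightarrow> \<delta> < k \<and> wf_sub k c) \<Longrightarrow> wf_sub k (Node f es)"

inductive det_sub :: "dtree \<Rightarrow> bool" where
  "det_sub (Leaf d)"
| "distinct (map fst es) \<Longrightarrow> (\<And>\<delta> c. (\<delta>, c) \<in> set es \<Longrightarrow> det_sub c) \<Longrightarrow> det_sub (Node f es)"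

inductive attr_in :: "nat \<Rightarrow> dtree \<Rightarrow> bool" where
  "attr_in f (Node f es)"
| "(\<delta>, c) \<in> set es \<Longrightarrow> attr_in g c \<Longrightarrow> attr_in g (Node f es)"

inductive path_of :: "dtree \<Rightarrow> (nat \<times> nat) list \<Rightarrow> nat \<Rightarrow> bool" where
  "path_of (Leaf d) [] d"
| "(\<delta>, c) \<in> set es \<Longrightarrow> path_of c w d \<Longrightarrow> path_of (Node f es) ((f, \<delta>) # w) d"

definition k_tree :: "nat \<Rightarrow> ktree \<Rightarrow> bool" where
  "k_tree k \<Gamma> \<longleftrightarrow> \<Gamma> \<noteq> [] \<and> (\<forall>t\<in>set \<Gamma>. wf_sub k t)"

definition At_tree :: "ktree \<Rightarrow> nat set" where
  "At_tree \<Gamma> = {f. \<exists>t\<in>set \<Gamma>. attr_in f t}"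

definition nondet_tree :: "nat \<Rightarrow> table \<Rightarrow> ktree \<Rightarrow> bool" where
  "nondet_tree k T \<Gamma> \<longleftrightarrow> k_tree k \<Gamma> \<and> At_tree \<Gamma> \<subseteq> At T \<and>
     (\<forall>row\<in>Rows T. \<exists>t\<in>set \<Gamma>. \<exists>w d. path_of t w d \<and> row \<in> Rows (sub T w)) \<and>
     (\<forall>t\<in>set \<Gamma>. \<forall>w d. path_of t w d \<longrightarrow> sub T w = empty_table \<or> d \<in> Pi_dec (sub T w))"

definition det_tree :: "nat \<Rightarrow> table \<Rightarrow> ktree \<Rightarrow> bool" where
  "det_tree k T \<Gamma> \<longleftrightarrow> nondet_tree k T \<Gamma> \<and> length \<Gamma> = 1 \<and> (\<forall>t\<in>set \<Gamma>. det_sub t)"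

definition complexity_measure :: "(nat list \<Rightarrow> nat) \<Rightarrow> bool" where
  "complexity_measure \<psi> \<longleftrightarrow>
     (\<forall>a. \<psi> a = 0 \<longleftrightarrow> a = []) \<and>
     (\<forall>a b. mset a = mset b \<longrightarrow> \<psi> a = \<psi> b) \<and>
     (\<forall>a b. \<psi> a \<le> \<psi> (a @ b)) \<and>
     (\<forall>a b. \<psi> (a @ b) \<le> \<psi> a + \<psi> b)"

definition bounded_complexity_measure :: "(nat list \<Rightarrow> nat) \<Rightarrow> bool" where
  "bounded_complexity_measure \<psi> \<longleftrightarrow> complexity_measure \<psi> \<and> (\<forall>a. length a \<le> \<psi> a)"

definition psi_tree :: "(nat list \<Rightarrow> nat) \<Rightarrow> ktree \<Rightarrow> nat" where
  "psi_tree \<psi> \<Gamma> = Max {\<psi> (map fst w) | t w d. t \<in> set \<Gamma> \<and> path_of t w d}"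

definition psi_d :: "(nat list \<Rightarrow> nat) \<Rightarrow> nat \<Rightarrow> table \<Rightarrow> nat" where
  "psi_d \<psi> k T = (if T = empty_table then 0
                   else (LEAST n. \<exists>\<Gamma>. det_tree k T \<Gamma> \<and> psi_tree \<psi> \<Gamma> = n))"

definition psi_a :: "(nat list \<Rightarrow> nat) \<Rightarrow> nat \<Rightarrow> table \<Rightarrow> nat" where
  "psi_a \<psi> k T = (if T = empty_table then 0
                   else (LEAST n. \<exists>\<Gamma>. nondet_tree k T \<Gamma> \<and> psi_tree \<psi> \<Gamma> = n))"

definition Omega_n :: "(nat list \<Rightarrow> nat) \<Rightarrow> nat \<Rightarrow> table \<Rightarrow> nat \<Rightarrow> (nat \<times> nat) list set" where
  "Omega_n \<psi> k T n = {\<alpha> \<in> Omega k T. \<psi> (map fst \<alpha>) \<le> n}"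

definition is_cover :: "(nat list \<Rightarrow> nat) \<Rightarrow> nat \<Rightarrow> table \<Rightarrow> nat \<Rightarrow> (nat \<times> nat) list set \<Rightarrow> bool" where
  "is_cover \<psi> k T n U \<longleftrightarrow> finite U \<and> U \<subseteq> Omega_n \<psi> k T n \<and> (\<Union>\<alpha>\<in>U. Rows (sub T \<alpha>)) = Rows T"

definition irred_cover :: "(nat list \<Rightarrow> nat) \<Rightarrow> nat \<Rightarrow> table \<Rightarrow> nat \<Rightarrow> (nat \<times> nat) list set \<Rightarrow> bool" where
  "irred_cover \<psi> k T n U \<longleftrightarrow> is_cover \<psi> k T n U \<and> (\<forall>V. V \<subset> U \<longrightarrow> \<not> is_cover \<psi> k T n V)"

definition l_psi :: "(nat list \<Rightarrow> nat) \<Rightarrow> nat \<Rightarrow> table \<Rightarrow> nat \<Rightarrow> nat" where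
  "l_psi \<psi> k T n = (if T = empty_table then 0
                     else Max {card U | U. irred_cover \<psi> k T n U})"

definition L_defined :: "(nat list \<Rightarrow> nat) \<Rightarrow> nat \<Rightarrow> table set \<Rightarrow> nat \<Rightarrow> bool" where
  "L_defined \<psi> k A n \<longleftrightarrow> finite {l_psi \<psi> k T n | T. T \<in> A}"

definition H_defined :: "(nat list \<Rightarrow> nat) \<Rightarrow> nat \<Rightarrow> table set \<Rightarrow> nat \<Rightarrow> bool" where
  "H_defined \<psi> k A n \<longleftrightarrow> finite {psi_d \<psi> k T | T. T \<in> A \<and> psi_a \<psi> k T \<le> n}"

end

theory Submission
  imports Defs "HOL-Library.Countable"
begin

lemma Rows_sub: "Rows (sub T \<alpha>) = {x \<in> Rows T. row_matches (fst T) (fst x) \<alpha>}"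
  unfolding sub_def Rows_def Let_def empty_table_def
  by (auto simp: filter_empty_conv split: if_splits)

lemma sub_empty_iff: "sub T \<alpha> = empty_table \<longleftrightarrow> Rows (sub T \<alpha>) = {}"
  unfolding sub_def Rows_def Let_def empty_table_def by auto

lemma Pi_Rows: "Pi_dec T = (\<Inter>x\<in>Rows T. snd x)"
  unfolding Pi_dec_def Rows_def by (auto simp: case_prod_beta)

lemma path_Node: "path_of (Node f es) w d \<longleftrightarrow> (\<exists>\<delta> c w'. w = (f,\<delta>) # w' \<and> (\<delta>, c) \<in> set es \<and> path_of c w' d)"
proof
  assume "path_of (Node f es) w d" then show "\<exists>\<delta> c w'. w = (f,\<delta>) # w' \<and> (\<delta>, c) \<in> set es \<and> path_of c w' d"
    by (cases rule: path_of.cases) auto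
qed (auto intro: path_of.intros)

lemma path_Leaf: "path_of (Leaf e) w d \<longleftrightarrow> w = [] \<and> d = e"
  by (auto elim: path_of.cases intro: path_of.intros)

lemma wf_path_ex: "wf_sub k t \<Longrightarrow> \<exists>w d. path_of t w d"
proof (induction rule: wf_sub.induct)
  case (1 d) then show ?case by (auto simp: path_Leaf)
next
  case (2 es f)
  obtain x where x: "x \<in> set es" using 2(1) by (cases es) auto
  obtain \<delta> c where dc: "x = (\<delta>,c)" by (cases x)
  then have "(\<delta>,c) \<in> set es" using x by simp
  then have "wf_sub k c \<and> (\<exists>w d. path_of c w d)" using 2(2) by simp
  then obtain w d where "path_of c w d" by blast
  then have "path_of (Node f es) ((f,\<delta>)#w) d" using \<open>(\<delta>,c) \<in> set es\<close> by (rule path_of.intros(2)[rotated])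
  then show ?case by blast
qed

lemma wf_path_fin: "wf_sub k t \<Longrightarrow> finite {(w,d). path_of t w d}"
proof (induction rule: wf_sub.induct)
  case (1 d) then show ?case by (simp add: path_Leaf)
next
  case (2 es f)
  have "{(w,d). path_of (Node f es) w d} \<subseteq> (\<Union>(\<delta>,c)\<in>set es. (\<lambda>(w,d). ((f,\<delta>)#w,d)) ` {(w,d). path_of c w d})"
  proof
    fix x assume "x \<in> {(w,d). path_of (Node f es) w d}"
    then obtain w d where x: "x = (w,d)" "path_of (Node f es) w d" by auto
    then obtain \<delta> c w' where "w = (f,\<delta>) # w'" "(\<delta>, c) \<in> set es" "path_of c w' d"
      unfolding path_Node by blast
    note hh = this
    show "x \<in> (\<Union>(\<delta>,c)\<in>set es. (\<lambda>(w,d). ((f,\<delta>)#w,d)) ` {(w,d). path_of c w d})"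
    proof -
      have "x \<in> (\<lambda>(w, d). ((f, \<delta>) # w, d)) ` {(w, d). path_of c w d}"
      proof (rule image_eqI[of _ _ "(w',d)"])
        show "x = (\<lambda>(w,d). ((f,\<delta>)#w,d)) (w',d)" using x hh(1) by simp
        show "(w',d) \<in> {(w,d). path_of c w d}" using hh(3) by simp
      qed
      then show ?thesis unfolding UN_iff using hh(2) by (intro bexI[of _ "(\<delta>,c)"]) (simp only: prod.case)
    qed
  qed
  moreover have "finite (\<Union>(\<delta>,c)\<in>set es. (\<lambda>(w,d). ((f,\<delta>)#w,d)) ` {(w,d). path_of c w d})"
  proof (rule finite_UN_I)
    fix x assume "x \<in> set es"
    then have "finite {(w,d). path_of (snd x) w d}" using 2(2)[of "fst x" "snd x"] by simp
    then show "finite ((\<lambda>(\<delta>,c). (\<lambda>(w,d). ((f,\<delta>)#w,d)) ` {(w,d). path_of c w d}) x)"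
      by (cases x) simp
  qed simp
  ultimately show ?case by (rule finite_subset)
qed

lemma path_attr: "path_of t w d \<Longrightarrow> x \<in> set w \<Longrightarrow> attr_in (fst x) t"
proof (induction rule: path_of.induct)
  case (1 d) then show ?case by simp
next
  case (2 \<delta> c es w d f)
  show ?case
  proof (cases "x = (f,\<delta>)")
    case True then show ?thesis by (simp add: attr_in.intros(1))
  next
    case False then have "x \<in> set w" using 2(4) by simp
    then have "attr_in (fst x) c" using 2(3) by blast
    then show ?thesis using 2(1) by (rule attr_in.intros(2)[rotated])
  qed
qed

lemma path_wf_lt: "path_of t w d \<Longrightarrow> wf_sub k t \<Longrightarrow> x \<in> set w \<Longrightarrow> snd x < k"
proof (induction arbitrary: x rule: path_of.induct)
  case (1 d) then show ?case by simp
next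
  case (2 \<delta> c es w d f)
  from 2(4) have h: "\<And>\<delta> c. (\<delta>, c) \<in> set es \<Longrightarrow> \<delta> < k \<and> wf_sub k c" by (auto elim: wf_sub.cases)
  show ?case
  proof (cases "x = (f,\<delta>)")
    case True then show ?thesis using h 2(1) by simp
  next
    case False then have "x \<in> set w" using 2(5) by simp
    then show ?thesis using 2(3) h 2(1) by blast
  qed
qed

lemma count_dec:
  assumes "wf_sub k t" "det_sub t" "\<forall>w d. path_of t w d \<longrightarrow> length w \<le> h" and kp: "0 < k"
  shows "card {d. \<exists>w. path_of t w d} \<le> k ^ h"
  using assms(1-3)
proof (induction arbitrary: h rule: wf_sub.induct)
  case (1 d) then show ?case using kp by (simp add: path_Leaf)
next
  case (2 es f)
  from 2(3) have dist: "distinct (map fst es)" and dc: "\<And>\<delta> c. (\<delta>,c)\<in>set es \<Longrightarrow> det_sub c"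
    by (auto elim: det_sub.cases)
  obtain \<delta>0 c0 where e0: "(\<delta>0,c0) \<in> set es" using 2(1) by (cases es) auto
  then obtain w0 d0 where "path_of c0 w0 d0" using 2(2) wf_path_ex by blast
  with e0 have "path_of (Node f es) ((f,\<delta>0)#w0) d0" by (auto simp: path_Node)
  then have "length ((f,\<delta>0)#w0) \<le> h" using 2(4) by blast
  then obtain h' where hh: "h = Suc h'" by (cases h) auto
  have ch: "card {d. \<exists>w. path_of c w d} \<le> k ^ h'" if "(\<delta>,c) \<in> set es" for \<delta> c
  proof -
    have "\<forall>w d. path_of c w d \<longrightarrow> length w \<le> h'"
    proof (intro allI impI)
      fix w d assume "path_of c w d"
      then have "path_of (Node f es) ((f,\<delta>)#w) d" using that by (auto simp: path_Node)
      then have "length ((f,\<delta>)#w) \<le> h" using 2(4) by blast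
      then show "length w \<le> h'" using hh by simp
    qed
    then show ?thesis using 2(2) that dc by blast
  qed
  have eq: "{d. \<exists>w. path_of (Node f es) w d} = (\<Union>x\<in>set es. {d. \<exists>w. path_of (snd x) w d})"
    apply (auto simp: path_Node) apply (metis snd_conv) by blast
  have ck: "card (set es) \<le> k"
  proof -
    have "inj_on fst (set es)" using dist by (simp add: distinct_map)
    then have "card (set es) = card (fst ` set es)" by (simp add: card_image)
    also have "\<dots> \<le> card {..<k}"
    proof (rule card_mono)
      show "fst ` set es \<subseteq> {..<k}"
      proof
        fix y assume "y \<in> fst ` set es"
        then obtain c where "(y,c) \<in> set es" by force
        then show "y \<in> {..<k}" using 2(2) by blast
      qed
    qed simp
    finally show ?thesis by simp
  qed
  have "card (\<Union>x\<in>set es. {d. \<exists>w. path_of (snd x) w d}) \<le> (\<Sum>x\<in>set es. card {d. \<exists>w. path_of (snd x) w d})"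
    by (rule card_UN_le) simp
  also have "\<dots> \<le> (\<Sum>x\<in>set es. k ^ h')"
  proof (rule sum_mono)
    fix x assume "x \<in> set es"
    then show "card {d. \<exists>w. path_of (snd x) w d} \<le> k ^ h'" using ch[of "fst x" "snd x"] by simp
  qed
  also have "\<dots> = card (set es) * k ^ h'" by simp
  also have "\<dots> \<le> k * k ^ h'" using ck by simp
  finally have "card (\<Union>x\<in>set es. {d. \<exists>w. path_of (snd x) w d}) \<le> k * k ^ h'" .
  then show ?case using eq hh by simp
qed

lemma psi_fin: "k_tree k \<Gamma> \<Longrightarrow> finite {\<psi> (map fst w) | t w d. t \<in> set \<Gamma> \<and> path_of t w d}"
proof -
  assume kt: "k_tree k \<Gamma>"
  have "{\<psi> (map fst w) | t w d. t \<in> set \<Gamma> \<and> path_of t w d} \<subseteq>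
        (\<Union>t\<in>set \<Gamma>. (\<lambda>(w,d). \<psi> (map fst w)) ` {(w,d). path_of t w d})"
    by force
  moreover have "finite (\<Union>t\<in>set \<Gamma>. (\<lambda>(w,d). \<psi> (map fst w)) ` {(w,d). path_of t w d})"
  proof (rule finite_UN_I)
    fix t assume "t \<in> set \<Gamma>"
    then have "wf_sub k t" using kt unfolding k_tree_def by blast
    then show "finite ((\<lambda>(w,d). \<psi> (map fst w)) ` {(w,d). path_of t w d})"
      using wf_path_fin by blast
  qed simp
  ultimately show ?thesis by (rule finite_subset)
qed

lemma psi_tree_ge: "k_tree k \<Gamma> \<Longrightarrow> t \<in> set \<Gamma> \<Longrightarrow> path_of t w d \<Longrightarrow> \<psi> (map fst w) \<le> psi_tree \<psi> \<Gamma>"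
  unfolding psi_tree_def
  by (rule Max_ge) (blast intro: psi_fin)+

lemma psi_tree_le:
  assumes kt: "k_tree k \<Gamma>" and le: "\<forall>t\<in>set \<Gamma>. \<forall>w d. path_of t w d \<longrightarrow> \<psi> (map fst w) \<le> n"
  shows "psi_tree \<psi> \<Gamma> \<le> n"
proof -
  obtain t where t: "t \<in> set \<Gamma>" using kt unfolding k_tree_def by (cases \<Gamma>) auto
  then have "wf_sub k t" using kt unfolding k_tree_def by blast
  then obtain w d where "path_of t w d" using wf_path_ex by blast
  then have ne: "{\<psi> (map fst w) | t w d. t \<in> set \<Gamma> \<and> path_of t w d} \<noteq> {}" using t by blast
  show ?thesis unfolding psi_tree_def
    using Max_le_iff[OF psi_fin[OF kt] ne] le by blast
qed

fun chain :: "(nat \<times> nat) list \<Rightarrow> nat \<Rightarrow> Defs.dtree" where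
  "chain [] d = Leaf d"
| "chain ((f,\<delta>) # \<alpha>) d = Node f [(\<delta>, chain \<alpha> d)]"

lemma chain_path: "path_of (chain \<alpha> e) w d \<longleftrightarrow> w = \<alpha> \<and> d = e"
proof (induction \<alpha> arbitrary: w)
  case Nil then show ?case by (simp add: path_Leaf)
next
  case (Cons x \<alpha>)
  obtain f \<delta> where x: "x = (f,\<delta>)" by (cases x)
  show ?case unfolding x chain.simps path_Node using Cons.IH by auto
qed

lemma chain_wf: "\<forall>x\<in>set \<alpha>. snd x < k \<Longrightarrow> wf_sub k (chain \<alpha> e)"
proof (induction \<alpha>)
  case Nil then show ?case by (simp add: wf_sub.intros)
next
  case (Cons x \<alpha>)
  obtain f \<delta> where x: "x = (f,\<delta>)" by (cases x)
  show ?case unfolding x chain.simps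
    by (rule wf_sub.intros(2)) (use Cons x in auto)
qed

lemma chain_attr: "attr_in a (chain \<alpha> e) \<Longrightarrow> a \<in> fst ` set \<alpha>"
proof (induction \<alpha>)
  case Nil then show ?case by (auto elim: attr_in.cases)
next
  case (Cons x \<alpha>)
  obtain f \<delta> where x: "x = (f,\<delta>)" by (cases x)
  from Cons.prems have "attr_in a (Node f [(\<delta>, chain \<alpha> e)])" unfolding x by simp
  then have "a = f \<or> attr_in a (chain \<alpha> e)" by (cases rule: attr_in.cases) auto
  then show ?case using Cons.IH x by auto
qed

fun fullt :: "nat \<Rightarrow> ((nat \<times> nat) list \<Rightarrow> nat) \<Rightarrow> nat list \<Rightarrow> (nat \<times> nat) list \<Rightarrow> Defs.dtree" where
  "fullt k g [] acc = Leaf (g acc)"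
| "fullt k g (b # bs) acc = Node b (map (\<lambda>\<delta>. (\<delta>, fullt k g bs (acc @ [(b,\<delta>)]))) [0..<k])"

lemma fullt_path: "path_of (fullt k g bs acc) w d \<longleftrightarrow> (map fst w = bs \<and> (\<forall>x\<in>set w. snd x < k) \<and> d = g (acc @ w))"
proof (induction bs arbitrary: acc w d)
  case Nil then show ?case by (auto simp: path_Leaf)
next
  case (Cons b bs)
  show ?case
  proof
    assume "path_of (fullt k g (b # bs) acc) w d"
    then obtain \<delta> c w' where h: "w = (b,\<delta>) # w'" "(\<delta>, c) \<in> set (map (\<lambda>\<delta>. (\<delta>, fullt k g bs (acc @ [(b,\<delta>)]))) [0..<k])" "path_of c w' d"
      unfolding fullt.simps path_Node by blast
    then have "\<delta> < k" "c = fullt k g bs (acc @ [(b,\<delta>)])" by auto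
    then show "map fst w = b # bs \<and> (\<forall>x\<in>set w. snd x < k) \<and> d = g (acc @ w)"
      using h Cons.IH by auto
  next
    assume a: "map fst w = b # bs \<and> (\<forall>x\<in>set w. snd x < k) \<and> d = g (acc @ w)"
    then obtain \<delta> w' where w: "w = (b,\<delta>) # w'" by (cases w) auto
    have "path_of (fullt k g bs (acc @ [(b,\<delta>)])) w' d" using a w Cons.IH by auto
    moreover have "(\<delta>, fullt k g bs (acc @ [(b,\<delta>)])) \<in> set (map (\<lambda>\<delta>. (\<delta>, fullt k g bs (acc @ [(b,\<delta>)]))) [0..<k])"
      using a w by auto
    ultimately show "path_of (fullt k g (b # bs) acc) w d"
      unfolding fullt.simps w by (rule path_of.intros(2)[rotated])
  qed
qed

lemma fullt_wf: "0 < k \<Longrightarrow> wf_sub k (fullt k g bs acc)"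
proof (induction bs arbitrary: acc)
  case Nil then show ?case by (simp add: wf_sub.intros)
next
  case (Cons b bs)
  show ?case unfolding fullt.simps
    by (rule wf_sub.intros(2)) (use Cons in auto)
qed

lemma fullt_det_sub: "det_sub (fullt k g bs acc)"
proof (induction bs arbitrary: acc)
  case Nil then show ?case by (simp add: det_sub.intros)
next
  case (Cons b bs)
  show ?case unfolding fullt.simps
    by (rule det_sub.intros(2)) (use Cons in \<open>auto simp: comp_def\<close>)
qed

lemma fullt_attr: "attr_in a (fullt k g bs acc) \<Longrightarrow> a \<in> set bs"
proof (induction bs arbitrary: acc)
  case Nil then show ?case by (auto elim: attr_in.cases)
next
  case (Cons b bs)
  from Cons.prems have "attr_in a (Node b (map (\<lambda>\<delta>. (\<delta>, fullt k g bs (acc @ [(b,\<delta>)]))) [0..<k]))" by simp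
  then have "a = b \<or> (\<exists>\<delta>. attr_in a (fullt k g bs (acc @ [(b,\<delta>)])))"
    by (cases rule: attr_in.cases) auto
  then show ?case using Cons.IH by auto
qed

lemma valid_row: "valid_table k T \<Longrightarrow> (r,D) \<in> Rows T \<Longrightarrow> length r = length (fst T) \<and> (\<forall>v\<in>set r. v < k) \<and> finite D \<and> D \<noteq> {}"
  unfolding valid_table_def Rows_def by fast

lemma row_val:
  assumes "length r = length as" "b \<in> set as"
  shows "map_of (zip as r) b = Some (the (map_of (zip as r) b)) \<and> the (map_of (zip as r) b) \<in> set r"
proof -
  obtain y where y: "map_of (zip as r) b = Some y" using map_of_zip_is_Some[OF assms(1)[symmetric]] assms(2) by blast
  then have "(b,y) \<in> set (zip as r)" by (rule map_of_SomeD)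
  then have "y \<in> set r" by (rule set_zip_rightD)
  then show ?thesis using y by simp
qed

lemma fullt_det:
  assumes v: "valid_table k T" and k: "0 < k" and bs: "set bs \<subseteq> At T"
   and H: "\<And>w. map fst w = bs \<Longrightarrow> \<forall>x\<in>set w. snd x < k \<Longrightarrow> Rows (sub T w) \<noteq> {} \<Longrightarrow> Pi_dec (sub T w) \<noteq> {}"
  shows "det_tree k T [fullt k (\<lambda>w. SOME d. d \<in> Pi_dec (sub T w)) bs []]"
    and "psi_tree \<psi> [fullt k (\<lambda>w. SOME d. d \<in> Pi_dec (sub T w)) bs []] = \<psi> bs"
proof -
  define g where "g = (\<lambda>w. SOME d. d \<in> Pi_dec (sub T w))"
  define t where "t = fullt k g bs []"
  have kt: "k_tree k [t]" unfolding k_tree_def t_def using fullt_wf[OF k] by simp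
  have at: "At_tree [t] \<subseteq> At T" unfolding At_tree_def t_def using fullt_attr bs by auto
  have cov: "\<forall>row\<in>Rows T. \<exists>t'\<in>set [t]. \<exists>w d. path_of t' w d \<and> row \<in> Rows (sub T w)"
  proof
    fix row assume row: "row \<in> Rows T"
    obtain r D where rD: "row = (r,D)" by (cases row)
    have lr: "length r = length (fst T)" and rk: "\<forall>v\<in>set r. v < k" using valid_row[OF v] row rD by auto
    define w where "w = map (\<lambda>b. (b, the (map_of (zip (fst T) r) b))) bs"
    have bT: "b \<in> set (fst T)" if "b \<in> set bs" for b using that bs unfolding At_def by auto
    have mf: "map fst w = bs" unfolding w_def by (simp add: comp_def)
    have wk: "\<forall>x\<in>set w. snd x < k"
    proof
      fix x assume "x \<in> set w"
      then obtain b where b: "b \<in> set bs" "x = (b, the (map_of (zip (fst T) r) b))" unfolding w_def by auto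
      then show "snd x < k" using row_val[OF lr bT[OF b(1)]] rk by auto
    qed
    have rm: "row_matches (fst T) r w"
      unfolding row_matches_def
    proof
      fix x assume "x \<in> set w"
      then obtain b where b: "b \<in> set bs" "x = (b, the (map_of (zip (fst T) r) b))" unfolding w_def by auto
      then show "case x of (f, \<delta>) \<Rightarrow> map_of (zip (fst T) r) f = Some \<delta>"
        using row_val[OF lr bT[OF b(1)]] by auto
    qed
    have "path_of t w (g ([] @ w))" unfolding t_def fullt_path using mf wk by simp
    moreover have "row \<in> Rows (sub T w)" using row rm rD by (simp add: Rows_sub)
    ultimately show "\<exists>t'\<in>set [t]. \<exists>w d. path_of t' w d \<and> row \<in> Rows (sub T w)" by auto
  qed
  have dec: "\<forall>t'\<in>set [t]. \<forall>w d. path_of t' w d \<longrightarrow> sub T w = empty_table \<or> d \<in> Pi_dec (sub T w)"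
  proof (intro ballI allI impI)
    fix t' w d assume "t' \<in> set [t]" "path_of t' w d"
    then have "path_of (fullt k g bs []) w d" unfolding t_def by simp
    then have p: "map fst w = bs" "\<forall>x\<in>set w. snd x < k" "d = g w" using fullt_path[of k g bs "[]" w d] by simp_all
    show "sub T w = empty_table \<or> d \<in> Pi_dec (sub T w)"
    proof (cases "sub T w = empty_table")
      case False
      then have "Rows (sub T w) \<noteq> {}" using sub_empty_iff by blast
      then have "Pi_dec (sub T w) \<noteq> {}" using H p by blast
      then have "g w \<in> Pi_dec (sub T w)" unfolding g_def by (simp add: some_in_eq)
      then show ?thesis using p by simp
    qed simp
  qed
  have ds: "det_sub t" unfolding t_def by (rule fullt_det_sub)
  show "det_tree k T [fullt k (\<lambda>w. SOME d. d \<in> Pi_dec (sub T w)) bs []]"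
    unfolding g_def[symmetric] t_def[symmetric] det_tree_def nondet_tree_def
    using kt at cov dec ds by simp
  have le: "psi_tree \<psi> [t] \<le> \<psi> bs"
    by (rule psi_tree_le[OF kt]) (simp add: t_def fullt_path)
  have "path_of t (map (\<lambda>b. (b,0)) bs) (g ([] @ map (\<lambda>b. (b,0)) bs))"
    unfolding t_def fullt_path using k by (simp add: comp_def)
  note pp = this
  have "\<psi> (map fst (map (\<lambda>b. (b,0::nat)) bs)) \<le> psi_tree \<psi> [t]"
    by (rule psi_tree_ge[OF kt _ pp]) simp
  then have "\<psi> bs \<le> psi_tree \<psi> [t]" by (simp add: comp_def)
  with le show "psi_tree \<psi> [fullt k (\<lambda>w. SOME d. d \<in> Pi_dec (sub T w)) bs []] = \<psi> bs"
    unfolding g_def[symmetric] t_def[symmetric] by simp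
qed

lemma det_exists:
  assumes v: "valid_table k T" and k: "0 < k"
  shows "\<exists>\<Gamma>. det_tree k T \<Gamma>"
proof -
  have H: "Pi_dec (sub T w) \<noteq> {}" if w: "map fst w = fst T" "\<forall>x\<in>set w. snd x < k" "Rows (sub T w) \<noteq> {}" for w
  proof -
    obtain x where x: "x \<in> Rows (sub T w)" using w(3) by blast
    have one: "y = x" if y: "y \<in> Rows (sub T w)" for y
    proof -
      obtain r D where rD: "x = (r,D)" by (cases x)
      obtain r' D' where rD': "y = (r',D')" by (cases y)
      have xr: "(r,D) \<in> Rows T" "row_matches (fst T) r w" using x rD by (auto simp: Rows_sub)
      have yr: "(r',D') \<in> Rows T" "row_matches (fst T) r' w" using y rD' by (auto simp: Rows_sub)
      have l1: "length r = length (fst T)" using valid_row[OF v xr(1)] by simp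
      have l2: "length r' = length (fst T)" using valid_row[OF v yr(1)] by simp
      have "map_of (zip (fst T) r) b = map_of (zip (fst T) r') b" for b
      proof (cases "b \<in> set (fst T)")
        case True
        then obtain \<delta> where "(b,\<delta>) \<in> set w" using w(1) by (metis imageE list.set_map prod.collapse)
        then show ?thesis using xr(2) yr(2) unfolding row_matches_def by fastforce
      next
        case False
        have "map_of (zip (fst T) r) b = None" using map_of_zip_is_None[of "fst T" r b] l1 False by simp
        moreover have "map_of (zip (fst T) r') b = None" using map_of_zip_is_None[of "fst T" r' b] l2 False by simp
        ultimately show ?thesis by simp
      qed
      then have "map_of (zip (fst T) r) = map_of (zip (fst T) r')" by (rule ext)
      moreover have "distinct (fst T)" using v unfolding valid_table_def by simp
      ultimately have "r = r'" using map_of_zip_inject[OF l1 l2] by blast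
      moreover have "inj_on fst (Rows T)" using v unfolding valid_table_def Rows_def by (simp add: distinct_map)
      ultimately show "y = x" using xr(1) yr(1) rD rD' by (metis fst_conv inj_onD)
    qed
    then have "Rows (sub T w) = {x}" using x by blast
    moreover have "x \<in> Rows T" using x by (simp add: Rows_sub)
    then have "snd x \<noteq> {}" using valid_row[OF v, of "fst x" "snd x"] by simp
    ultimately show ?thesis by (simp add: Pi_Rows)
  qed
  have "set (fst T) \<subseteq> At T" by (simp add: At_def)
  then show ?thesis using fullt_det(1)[OF v k _ H] by blast
qed

lemma Omega_n_fin:
  assumes "bounded_complexity_measure \<psi>"
  shows "finite (Omega_n \<psi> k T n)"
proof -
  have "Omega_n \<psi> k T n \<subseteq> {xs. set xs \<subseteq> At T \<times> {..<k} \<and> length xs \<le> n}"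
  proof
    fix \<alpha> assume a: "\<alpha> \<in> Omega_n \<psi> k T n"
    then have "length (map fst \<alpha>) \<le> \<psi> (map fst \<alpha>)" using assms unfolding bounded_complexity_measure_def by blast
    then have "length \<alpha> \<le> n" using a unfolding Omega_n_def by simp
    moreover have "set \<alpha> \<subseteq> At T \<times> {..<k}" using a unfolding Omega_n_def Omega_def by auto
    ultimately show "\<alpha> \<in> {xs. set xs \<subseteq> At T \<times> {..<k} \<and> length xs \<le> n}" by simp
  qed
  moreover have "finite {xs. set xs \<subseteq> At T \<times> {..<k} \<and> length xs \<le> n}"
    by (rule finite_lists_length_le) (simp add: At_def)
  ultimately show ?thesis by (rule finite_subset)
qed

lemma irred_exists: "is_cover \<psi> k T n U0 \<Longrightarrow> \<exists>U\<subseteq>U0. irred_cover \<psi> k T n U"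
proof (induction "card U0" arbitrary: U0 rule: less_induct)
  case less
  show ?case
  proof (cases "irred_cover \<psi> k T n U0")
    case True then show ?thesis by blast
  next
    case False
    then obtain V where V: "V \<subset> U0" "is_cover \<psi> k T n V" using less.prems unfolding irred_cover_def by blast
    have "finite U0" using less.prems unfolding is_cover_def by blast
    then have "card V < card U0" using V(1) by (rule psubset_card_mono)
    then obtain U where "U \<subseteq> V" "irred_cover \<psi> k T n U" using less.hyps V(2) by blast
    then show ?thesis using V(1) by blast
  qed
qed

lemma irred_card_fin:
  assumes "bounded_complexity_measure \<psi>"
  shows "finite {card U | U. irred_cover \<psi> k T n U}"
proof -
  have "{card U | U. irred_cover \<psi> k T n U} \<subseteq> card ` Pow (Omega_n \<psi> k T n)"
  proof
    fix x assume "x \<in> {card U | U. irred_cover \<psi> k T n U}"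
    then obtain U where U: "x = card U" "irred_cover \<psi> k T n U" by blast
    then have "U \<in> Pow (Omega_n \<psi> k T n)" unfolding irred_cover_def is_cover_def by simp
    then show "x \<in> card ` Pow (Omega_n \<psi> k T n)" using U(1) by (rule rev_image_eqI)
  qed
  then show ?thesis by (rule finite_subset) (simp add: Omega_n_fin[OF assms])
qed

lemma l_psi_ge:
  assumes "bounded_complexity_measure \<psi>" "T \<noteq> empty_table" "irred_cover \<psi> k T n U"
  shows "card U \<le> l_psi \<psi> k T n"
proof -
  have "card U \<le> Max {card U | U. irred_cover \<psi> k T n U}"
    by (rule Max_ge[OF irred_card_fin[OF assms(1)]]) (use assms(3) in blast)
  then show ?thesis unfolding l_psi_def using assms(2) by simp
qed

lemma Omega_cover:
  assumes "bounded_complexity_measure \<psi>"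
  shows "is_cover \<psi> k T n (Omega_n \<psi> k T n)"
proof -
  have "\<psi> [] = 0" using assms unfolding bounded_complexity_measure_def complexity_measure_def by blast
  then have e: "[] \<in> Omega_n \<psi> k T n" unfolding Omega_n_def Omega_def by simp
  have "Rows (sub T []) = Rows T" by (auto simp: Rows_sub row_matches_def)
  then have "(\<Union>\<alpha>\<in>Omega_n \<psi> k T n. Rows (sub T \<alpha>)) = Rows T"
  proof -
    assume r: "Rows (sub T []) = Rows T"
    have "(\<Union>\<alpha>\<in>Omega_n \<psi> k T n. Rows (sub T \<alpha>)) \<subseteq> Rows T"
      by (rule UN_least) (simp add: Rows_sub)
    moreover have "Rows T \<subseteq> (\<Union>\<alpha>\<in>Omega_n \<psi> k T n. Rows (sub T \<alpha>))"
      using e r by blast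
    ultimately show ?thesis by (rule equalityI)
  qed
  then show ?thesis unfolding is_cover_def using Omega_n_fin[OF assms] by simp
qed

lemma setcard_eq: "{card U | U. P U} = card ` {U. P U}"
  by blast

lemma l_psi_attained:
  assumes "bounded_complexity_measure \<psi>" "T \<noteq> empty_table"
  shows "\<exists>U. irred_cover \<psi> k T n U \<and> card U = l_psi \<psi> k T n"
proof -
  obtain U0 where U0: "irred_cover \<psi> k T n U0" using irred_exists[OF Omega_cover[OF assms(1)]] by blast
  have fin: "finite (card ` {U. irred_cover \<psi> k T n U})"
    using irred_card_fin[OF assms(1)] unfolding setcard_eq .
  have ne: "card ` {U. irred_cover \<psi> k T n U} \<noteq> {}" using U0 by blast
  have "Max (card ` {U. irred_cover \<psi> k T n U}) \<in> card ` {U. irred_cover \<psi> k T n U}"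
    by (rule Max_in[OF fin ne])
  then obtain U where U: "Max (card ` {U. irred_cover \<psi> k T n U}) = card U" "U \<in> {U. irred_cover \<psi> k T n U}"
    by (rule imageE)
  then have "irred_cover \<psi> k T n U" "card U = Max (card ` {U. irred_cover \<psi> k T n U})" by simp_all
  then show ?thesis unfolding l_psi_def setcard_eq using assms(2) by (intro exI[of _ U]) simp
qed

lemma cm_props:
  assumes "complexity_measure \<psi>"
  shows "\<psi> [] = 0" "\<And>a b. mset a = mset b \<Longrightarrow> \<psi> a = \<psi> b" "\<And>a b. \<psi> a \<le> \<psi> (a @ b)"
    "\<And>a b. \<psi> (a @ b) \<le> \<psi> a + \<psi> b"
proof -
  note c = assms[unfolded complexity_measure_def]
  have c1: "\<forall>a. (\<psi> a = 0) = (a = [])" by (rule conjunct1[OF c])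
  have c2: "\<forall>a b. mset a = mset b \<longrightarrow> \<psi> a = \<psi> b" by (rule conjunct1[OF conjunct2[OF c]])
  have c3: "\<forall>a b. \<psi> a \<le> \<psi> (a @ b)" by (rule conjunct1[OF conjunct2[OF conjunct2[OF c]]])
  have c4: "\<forall>a b. \<psi> (a @ b) \<le> \<psi> a + \<psi> b" by (rule conjunct2[OF conjunct2[OF conjunct2[OF c]]])
  show "\<psi> [] = 0" using c1 by blast
  show "\<And>a b. mset a = mset b \<Longrightarrow> \<psi> a = \<psi> b" by (rule spec[OF spec[OF c2], THEN mp])
  show "\<And>a b. \<psi> a \<le> \<psi> (a @ b)" by (rule spec[OF spec[OF c3]])
  show "\<And>a b. \<psi> (a @ b) \<le> \<psi> a + \<psi> b" by (rule spec[OF spec[OF c4]])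
qed

lemma psi_concat: "complexity_measure \<psi> \<Longrightarrow> \<psi> (concat xs) \<le> sum_list (map \<psi> xs)"
proof (induction xs)
  case Nil then show ?case using cm_props(1) by simp
next
  case (Cons x xs)
  have "\<psi> (x @ concat xs) \<le> \<psi> x + \<psi> (concat xs)" by (rule cm_props(4)[OF Cons.prems])
  then show ?case using Cons by simp
qed

lemma psi_sub:
  assumes cm: "complexity_measure \<psi>" and d: "distinct bs" and s: "set bs \<subseteq> set ys"
  shows "\<psi> bs \<le> \<psi> ys"
proof -
  have "mset bs \<subseteq># mset ys"
  proof (rule mset_subset_eqI)
    fix a
    show "count (mset bs) a \<le> count (mset ys) a"
    proof (cases "a \<in> set bs")
      case True
      then have c1: "count (mset bs) a = 1" using d by (simp add: distinct_count_atmost_1)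
      have "a \<in> set ys" using True s by blast
      then have "0 < count (mset ys) a" by simp
      then show ?thesis using c1 by simp
    next
      case False
      then have "count (mset bs) a = 0" by (simp add: count_eq_zero_iff)
      then show ?thesis by (metis le0)
    qed
  qed
  obtain rest where rest: "mset rest = mset ys - mset bs" using ex_mset by blast
  have "mset (bs @ rest) = mset ys" using rest \<open>mset bs \<subseteq># mset ys\<close> by (simp add: subset_mset.add_diff_inverse)
  then have "\<psi> (bs @ rest) = \<psi> ys" by (rule cm_props(2)[OF cm])
  moreover have "\<psi> bs \<le> \<psi> (bs @ rest)" by (rule cm_props(3)[OF cm])
  ultimately show ?thesis by simp
qed

lemma nondet_opt:
  assumes v: "valid_table k T" and k: "0 < k" and ne: "T \<noteq> empty_table"
  shows "\<exists>\<Gamma>. nondet_tree k T \<Gamma> \<and> psi_tree \<psi> \<Gamma> = psi_a \<psi> k T"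
proof -
  obtain \<Gamma> where "det_tree k T \<Gamma>" using det_exists[OF v k] by blast
  then have "nondet_tree k T \<Gamma>" unfolding det_tree_def by simp
  then have ex: "\<exists>n. \<exists>\<Gamma>. nondet_tree k T \<Gamma> \<and> psi_tree \<psi> \<Gamma> = n" by blast
  have "\<exists>\<Gamma>. nondet_tree k T \<Gamma> \<and> psi_tree \<psi> \<Gamma> = (LEAST n. \<exists>\<Gamma>. nondet_tree k T \<Gamma> \<and> psi_tree \<psi> \<Gamma> = n)"
    by (rule LeastI_ex[OF ex])
  then show ?thesis unfolding psi_a_def using ne by simp
qed

lemma det_opt:
  assumes v: "valid_table k T" and k: "0 < k" and ne: "T \<noteq> empty_table"
  shows "\<exists>\<Gamma>. det_tree k T \<Gamma> \<and> psi_tree \<psi> \<Gamma> = psi_d \<psi> k T"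
proof -
  obtain \<Gamma> where "det_tree k T \<Gamma>" using det_exists[OF v k] by blast
  then have ex: "\<exists>n. \<exists>\<Gamma>. det_tree k T \<Gamma> \<and> psi_tree \<psi> \<Gamma> = n" by blast
  have "\<exists>\<Gamma>. det_tree k T \<Gamma> \<and> psi_tree \<psi> \<Gamma> = (LEAST n. \<exists>\<Gamma>. det_tree k T \<Gamma> \<and> psi_tree \<psi> \<Gamma> = n)"
    by (rule LeastI_ex[OF ex])
  then show ?thesis unfolding psi_d_def using ne by simp
qed

lemma psi_d_le: "T \<noteq> empty_table \<Longrightarrow> det_tree k T \<Gamma> \<Longrightarrow> psi_d \<psi> k T \<le> psi_tree \<psi> \<Gamma>"
  unfolding psi_d_def by (simp add: Least_le exI)

lemma psi_a_le: "T \<noteq> empty_table \<Longrightarrow> nondet_tree k T \<Gamma> \<Longrightarrow> psi_a \<psi> k T \<le> psi_tree \<psi> \<Gamma>"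
  unfolding psi_a_def by (simp add: Least_le exI)

lemma dir1:
  assumes bcm: "bounded_complexity_measure \<psi>" and k: "0 < k" and v: "valid_table k T"
    and ne: "T \<noteq> empty_table" and pa: "psi_a \<psi> k T \<le> n"
    and lb: "\<And>U. irred_cover \<psi> k T n U \<Longrightarrow> card U \<le> B"
  shows "psi_d \<psi> k T \<le> B * n"
proof -
  have cm: "complexity_measure \<psi>" using bcm unfolding bounded_complexity_measure_def by simp
  obtain \<Gamma>0 where nd: "nondet_tree k T \<Gamma>0" and pv: "psi_tree \<psi> \<Gamma>0 = psi_a \<psi> k T"
    using nondet_opt[OF v k ne] by blast
  note ndd = nd[unfolded nondet_tree_def]
  have kt: "k_tree k \<Gamma>0" by (rule conjunct1[OF ndd])
  have atT: "At_tree \<Gamma>0 \<subseteq> At T" by (rule conjunct1[OF conjunct2[OF ndd]])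
  have covnd: "\<forall>row\<in>Rows T. \<exists>t\<in>set \<Gamma>0. \<exists>w d. path_of t w d \<and> row \<in> Rows (sub T w)"
    by (rule conjunct1[OF conjunct2[OF conjunct2[OF ndd]]])
  have decnd: "\<forall>t\<in>set \<Gamma>0. \<forall>w d. path_of t w d \<longrightarrow> sub T w = empty_table \<or> d \<in> Pi_dec (sub T w)"
    by (rule conjunct2[OF conjunct2[OF conjunct2[OF ndd]]])
  have wft: "wf_sub k t" if "t \<in> set \<Gamma>0" for t using kt that unfolding k_tree_def by blast
  define U0 where "U0 = {w. \<exists>t\<in>set \<Gamma>0. \<exists>d. path_of t w d}"
  have finU0: "finite U0"
  proof -
    have "U0 \<subseteq> (\<Union>t\<in>set \<Gamma>0. fst ` {(w,d). path_of t w d})"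
    proof
      fix w assume "w \<in> U0"
      then obtain t d where t: "t \<in> set \<Gamma>0" "path_of t w d" unfolding U0_def by blast
      then have "w \<in> fst ` {(w,d). path_of t w d}" by (intro rev_image_eqI[of "(w,d)"]) simp_all
      then show "w \<in> (\<Union>t\<in>set \<Gamma>0. fst ` {(w,d). path_of t w d})" by (rule UN_I[OF t(1)])
    qed
    moreover have "finite (\<Union>t\<in>set \<Gamma>0. fst ` {(w,d). path_of t w d})"
      by (rule finite_UN_I) (simp_all add: wf_path_fin[OF wft])
    ultimately show ?thesis by (rule finite_subset)
  qed
  have U0Om: "U0 \<subseteq> Omega_n \<psi> k T n"
  proof
    fix w assume "w \<in> U0"
    then obtain t d where t: "t \<in> set \<Gamma>0" "path_of t w d" unfolding U0_def by blast
    have "fst x \<in> At T \<and> snd x < k" if x: "x \<in> set w" for x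
    proof
      have "attr_in (fst x) t" by (rule path_attr[OF t(2) x])
      then have "fst x \<in> At_tree \<Gamma>0" unfolding At_tree_def using t(1) by blast
      then show "fst x \<in> At T" using atT by blast
      show "snd x < k" by (rule path_wf_lt[OF t(2) wft[OF t(1)] x])
    qed
    then have "w \<in> Omega k T" unfolding Omega_def by auto
    moreover have "\<psi> (map fst w) \<le> psi_tree \<psi> \<Gamma>0" by (rule psi_tree_ge[OF kt t])
    ultimately show "w \<in> Omega_n \<psi> k T n" unfolding Omega_n_def using pv pa by simp
  qed
  have U0cov: "(\<Union>\<alpha>\<in>U0. Rows (sub T \<alpha>)) = Rows T"
  proof (rule equalityI)
    show "(\<Union>\<alpha>\<in>U0. Rows (sub T \<alpha>)) \<subseteq> Rows T" by (rule UN_least) (simp add: Rows_sub)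
    show "Rows T \<subseteq> (\<Union>\<alpha>\<in>U0. Rows (sub T \<alpha>))"
    proof
      fix row assume "row \<in> Rows T"
      then obtain t w d where tw: "t \<in> set \<Gamma>0" "path_of t w d" "row \<in> Rows (sub T w)" using covnd by blast
      then have "w \<in> U0" unfolding U0_def by blast
      then show "row \<in> (\<Union>\<alpha>\<in>U0. Rows (sub T \<alpha>))" by (rule UN_I) (rule tw(3))
    qed
  qed
  have "is_cover \<psi> k T n U0" unfolding is_cover_def using finU0 U0Om U0cov by simp
  then have "\<exists>U\<subseteq>U0. irred_cover \<psi> k T n U" by (rule irred_exists)
  then obtain U where UU0: "U \<subseteq> U0" and irr: "irred_cover \<psi> k T n U" by blast
  have cU: "card U \<le> B" by (rule lb[OF irr])
  have Uc0: "is_cover \<psi> k T n U" using irr unfolding irred_cover_def by simp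
  have finU: "finite U" and UOm: "U \<subseteq> Omega_n \<psi> k T n" and Uc: "(\<Union>\<alpha>\<in>U. Rows (sub T \<alpha>)) = Rows T"
    using Uc0 unfolding is_cover_def by simp_all
  define S where "S = (\<Union>\<alpha>\<in>U. set (map fst \<alpha>))"
  have finS: "finite S" unfolding S_def using finU by simp
  define bs where "bs = sorted_list_of_set S"
  have sbs: "set bs = S" and dbs: "distinct bs" unfolding bs_def using finS by simp_all
  have bsAt: "set bs \<subseteq> At T"
  proof
    fix f assume "f \<in> set bs"
    then obtain \<alpha> where a: "\<alpha> \<in> U" "f \<in> set (map fst \<alpha>)" unfolding sbs S_def by blast
    then obtain \<delta> where "(f,\<delta>) \<in> set \<alpha>" by auto
    moreover have "\<alpha> \<in> Omega k T" using a(1) UOm unfolding Omega_n_def by blast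
    ultimately show "f \<in> At T" unfolding Omega_def by blast
  qed
  have H: "Pi_dec (sub T w) \<noteq> {}" if w: "map fst w = bs" "\<forall>x\<in>set w. snd x < k" "Rows (sub T w) \<noteq> {}" for w
  proof -
    obtain x where x: "x \<in> Rows (sub T w)" using w(3) by blast
    have xT: "x \<in> Rows T" using x by (simp add: Rows_sub)
    obtain \<alpha> where aU: "\<alpha> \<in> U" and xa: "x \<in> Rows (sub T \<alpha>)" using Uc xT by blast
    have "\<alpha> \<in> U0" using aU UU0 by blast
    then obtain t d where t: "t \<in> set \<Gamma>0" "path_of t \<alpha> d" unfolding U0_def by blast
    have "sub T \<alpha> \<noteq> empty_table" using xa sub_empty_iff by blast
    then have da: "d \<in> Pi_dec (sub T \<alpha>)" using decnd t by blast
    have xm: "row_matches (fst T) (fst x) w" and xma: "row_matches (fst T) (fst x) \<alpha>"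
      using x xa by (simp_all add: Rows_sub)
    have "d \<in> snd y" if y: "y \<in> Rows (sub T w)" for y
    proof -
      have yT: "y \<in> Rows T" and ym: "row_matches (fst T) (fst y) w" using y by (simp_all add: Rows_sub)
      have agree: "map_of (zip (fst T) (fst y)) f = map_of (zip (fst T) (fst x)) f" if f: "f \<in> set bs" for f
      proof -
        from f w(1) obtain \<delta> where fw: "(f,\<delta>) \<in> set w" by (metis imageE list.set_map prod.collapse)
        have "map_of (zip (fst T) (fst y)) f = Some \<delta>" using ym fw unfolding row_matches_def by blast
        moreover have "map_of (zip (fst T) (fst x)) f = Some \<delta>" using xm fw unfolding row_matches_def by blast
        ultimately show ?thesis by simp
      qed
      have "row_matches (fst T) (fst y) \<alpha>"
        unfolding row_matches_def
      proof
        fix p assume p: "p \<in> set \<alpha>"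
        obtain f \<delta> where fd: "p = (f,\<delta>)" by (cases p)
        have "f \<in> S" unfolding S_def using aU p fd by force
        then have "map_of (zip (fst T) (fst y)) f = map_of (zip (fst T) (fst x)) f" using agree sbs by blast
        moreover have "map_of (zip (fst T) (fst x)) f = Some \<delta>" using xma p fd unfolding row_matches_def by blast
        ultimately show "case p of (f, \<delta>) \<Rightarrow> map_of (zip (fst T) (fst y)) f = Some \<delta>" using fd by simp
      qed
      then have "y \<in> Rows (sub T \<alpha>)" using yT by (simp add: Rows_sub)
      then show ?thesis using da by (simp add: Pi_Rows)
    qed
    then have "d \<in> Pi_dec (sub T w)" by (simp add: Pi_Rows)
    then show ?thesis by blast
  qed
  have dt: "det_tree k T [fullt k (\<lambda>w. SOME d. d \<in> Pi_dec (sub T w)) bs []]"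
    by (rule fullt_det(1)[OF v k bsAt H])
  have pt: "psi_tree \<psi> [fullt k (\<lambda>w. SOME d. d \<in> Pi_dec (sub T w)) bs []] = \<psi> bs"
    by (rule fullt_det(2)[OF v k bsAt H])
  have "psi_d \<psi> k T \<le> \<psi> bs" using psi_d_le[OF ne dt, of \<psi>] pt by simp
  also have "\<psi> bs \<le> B * n"
  proof -
    obtain xs where xs: "set xs = U" "distinct xs" using finite_distinct_list[OF finU] by blast
    define ys where "ys = concat (map (map fst) xs)"
    have "set ys = S" unfolding ys_def S_def using xs(1) by auto
    then have "\<psi> bs \<le> \<psi> ys" using psi_sub[OF cm dbs] sbs by simp
    also have "\<psi> ys \<le> sum_list (map \<psi> (map (map fst) xs))" unfolding ys_def by (rule psi_concat[OF cm])
    also have "\<dots> = sum_list (map (\<lambda>\<alpha>. \<psi> (map fst \<alpha>)) xs)" by (simp add: comp_def)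
    also have "\<dots> = (\<Sum>\<alpha>\<in>U. \<psi> (map fst \<alpha>))" using sum_list_distinct_conv_sum_set[OF xs(2)] xs(1) by simp
    also have "\<dots> \<le> (\<Sum>\<alpha>\<in>U. n)"
    proof (rule sum_mono)
      fix \<alpha> assume "\<alpha> \<in> U"
      then show "\<psi> (map fst \<alpha>) \<le> n" using UOm unfolding Omega_n_def by blast
    qed
    also have "\<dots> = card U * n" by simp
    also have "\<dots> \<le> B * n" using cU by simp
    finally show ?thesis .
  qed
  finally show ?thesis .
qed

lemma dedup_id: "distinct (map fst xs) \<Longrightarrow> dedup xs = xs"
proof (induction xs rule: dedup.induct)
  case 1 then show ?case by simp
next
  case (2 r d xs)
  have "filter (\<lambda>(r', _). r' \<noteq> r) xs = xs"
  proof (rule filter_True)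
    show "\<forall>x\<in>set xs. case x of (r', _) \<Rightarrow> r' \<noteq> r" using "2.prems" by force
  qed
  then show ?case using 2 by simp
qed

lemma I_empty:
  assumes v: "valid_table k T" and ne: "fst T \<noteq> []"
  shows "I_op {} T = T"
proof -
  have "map (\<lambda>(r, d). (proj {} (fst T) r, d)) (snd T) = snd T"
  proof (rule map_idI)
    fix x assume x: "x \<in> set (snd T)"
    obtain r D where rD: "x = (r,D)" by (cases x)
    have "length r = length (fst T)" using valid_row[OF v, of r D] x rD by (simp add: Rows_def)
    then show "(\<lambda>(r, d). (proj {} (fst T) r, d)) x = x" using rD by (simp add: proj_def)
  qed
  moreover have "distinct (map fst (snd T))" using v unfolding valid_table_def by simp
  ultimately show ?thesis unfolding I_op_def using ne by (simp add: dedup_id)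
qed

lemma dir2:
  assumes bcm: "bounded_complexity_measure \<psi>" and k: "0 < k" and cl: "closed_class k A"
    and TA: "T \<in> A" and ne: "T \<noteq> empty_table" and irr: "irred_cover \<psi> k T n U"
  shows "\<exists>T'\<in>A. T' \<noteq> empty_table \<and> psi_a \<psi> k T' \<le> n \<and> card U \<le> k ^ psi_d \<psi> k T'"
proof -
  have AM: "A \<subseteq> M_inf k" and clA: "closure k A = A" using cl unfolding closed_class_def by simp_all
  have v: "valid_table k T" using TA AM unfolding M_inf_def by blast
  have fne: "fst T \<noteq> []"
  proof
    assume "fst T = []"
    then have "snd T = []" using v unfolding valid_table_def by simp
    then have "T = empty_table" using \<open>fst T = []\<close> unfolding empty_table_def by (simp add: prod_eq_iff)
    then show False using ne by simp
  qed
  have sne: "snd T \<noteq> []" using v fne unfolding valid_table_def by simp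
  have Uc0: "is_cover \<psi> k T n U" using irr unfolding irred_cover_def by simp
  have finU: "finite U" and UOm: "U \<subseteq> Omega_n \<psi> k T n" and Uc: "(\<Union>\<alpha>\<in>U. Rows (sub T \<alpha>)) = Rows T"
    using Uc0 unfolding is_cover_def by simp_all
  define \<nu> where "\<nu> = (\<lambda>r. let S = to_nat ` {\<beta>\<in>U. row_matches (fst T) r \<beta>} in if S = {} then {0} else S)"
  have \<nu>ok: "finite (\<nu> r) \<and> \<nu> r \<noteq> {}" for r unfolding \<nu>_def Let_def using finU by simp
  have \<nu>in: "to_nat \<beta> \<in> \<nu> r" if "\<beta> \<in> U" "row_matches (fst T) r \<beta>" for \<beta> r
  proof -
    have "to_nat \<beta> \<in> to_nat ` {\<beta>\<in>U. row_matches (fst T) r \<beta>}" using that by simp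
    then show ?thesis unfolding \<nu>_def Let_def by auto
  qed
  define T' where "T' = J_op \<nu> T"
  have fT': "fst T' = fst T" unfolding T'_def J_op_def by simp
  have rowsT': "Rows T' = (\<lambda>x. (fst x, \<nu> (fst x))) ` Rows T"
    unfolding T'_def J_op_def Rows_def by (simp add: case_prod_beta)
  have subT': "Rows (sub T' \<alpha>) = (\<lambda>x. (fst x, \<nu> (fst x))) ` Rows (sub T \<alpha>)" for \<alpha>
    unfolding Rows_sub rowsT' fT' by auto
  have ne': "T' \<noteq> empty_table" using fT' fne unfolding empty_table_def by auto
  have AtT': "At T' = At T" unfolding At_def using fT' by simp
  have T'A: "T' \<in> A"
  proof -
    have "card (At T - {}) = length (fst T)" using v unfolding valid_table_def At_def by (simp add: distinct_card)
    then have "T' \<in> closure1 k T" unfolding closure1_def T'_def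
      using I_empty[OF v fne] \<nu>ok by (intro CollectI exI[of _ "{}"] exI[of _ \<nu>]) simp
    then have "T' \<in> closure k A" unfolding closure_def using TA by blast
    then show ?thesis using clA by simp
  qed
  have v': "valid_table k T'" using T'A AM unfolding M_inf_def by blast
  obtain xs where xs: "set xs = U" "distinct xs" using finite_distinct_list[OF finU] by blast
  have Une: "U \<noteq> {}"
  proof
    assume "U = {}"
    then have "Rows T = {}" using Uc by simp
    then show False using sne unfolding Rows_def by simp
  qed
  define \<Gamma> where "\<Gamma> = map (\<lambda>\<alpha>. chain \<alpha> (to_nat \<alpha>)) xs"
  have Om: "\<forall>x\<in>set \<alpha>. fst x \<in> At T \<and> snd x < k" "\<psi> (map fst \<alpha>) \<le> n" if "\<alpha> \<in> U" for \<alpha>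
  proof -
    have "\<alpha> \<in> Omega_n \<psi> k T n" using that UOm by blast
    then have o1: "\<forall>x\<in>set \<alpha>. case x of (f, \<delta>) \<Rightarrow> f \<in> At T \<and> \<delta> < k" and o2: "\<psi> (map fst \<alpha>) \<le> n"
      unfolding Omega_n_def Omega_def by simp_all
    show "\<forall>x\<in>set \<alpha>. fst x \<in> At T \<and> snd x < k" using o1 by (simp add: case_prod_beta)
    show "\<psi> (map fst \<alpha>) \<le> n" by (rule o2)
  qed
  have kt: "k_tree k \<Gamma>"
    unfolding k_tree_def \<Gamma>_def using Une xs(1) Om(1) by (auto intro!: chain_wf)
  have at: "At_tree \<Gamma> \<subseteq> At T'"
  proof
    fix f assume "f \<in> At_tree \<Gamma>"
    then obtain \<alpha> where a: "\<alpha> \<in> U" "attr_in f (chain \<alpha> (to_nat \<alpha>))" unfolding At_tree_def \<Gamma>_def xs(1)[symmetric] by auto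
    have "f \<in> fst ` set \<alpha>" by (rule chain_attr[OF a(2)])
    then show "f \<in> At T'" using Om(1)[OF a(1)] AtT' by auto
  qed
  have cov: "\<forall>row\<in>Rows T'. \<exists>t\<in>set \<Gamma>. \<exists>w d. path_of t w d \<and> row \<in> Rows (sub T' w)"
  proof
    fix row assume "row \<in> Rows T'"
    then obtain x where x: "x \<in> Rows T" "row = (fst x, \<nu> (fst x))" unfolding rowsT' by blast
    then obtain \<alpha> where a: "\<alpha> \<in> U" "x \<in> Rows (sub T \<alpha>)" using Uc by blast
    have "row \<in> Rows (sub T' \<alpha>)" unfolding subT' using a(2) x(2) by blast
    moreover have "path_of (chain \<alpha> (to_nat \<alpha>)) \<alpha> (to_nat \<alpha>)" by (simp add: chain_path)
    moreover have "chain \<alpha> (to_nat \<alpha>) \<in> set \<Gamma>" unfolding \<Gamma>_def using a(1) xs(1) by simp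
    ultimately show "\<exists>t\<in>set \<Gamma>. \<exists>w d. path_of t w d \<and> row \<in> Rows (sub T' w)" by blast
  qed
  have dec: "\<forall>t\<in>set \<Gamma>. \<forall>w d. path_of t w d \<longrightarrow> sub T' w = empty_table \<or> d \<in> Pi_dec (sub T' w)"
  proof (intro ballI allI impI)
    fix t w d assume t: "t \<in> set \<Gamma>" "path_of t w d"
    then obtain \<alpha> where a: "\<alpha> \<in> U" "t = chain \<alpha> (to_nat \<alpha>)" unfolding \<Gamma>_def using xs(1) by auto
    then have wd: "w = \<alpha>" "d = to_nat \<alpha>" using t(2) chain_path by simp_all
    have "d \<in> snd y" if y: "y \<in> Rows (sub T' w)" for y
    proof -
      obtain x where x: "x \<in> Rows (sub T \<alpha>)" "y = (fst x, \<nu> (fst x))" using y unfolding subT' wd by blast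
      then have "row_matches (fst T) (fst x) \<alpha>" by (simp add: Rows_sub)
      then show ?thesis using \<nu>in[OF a(1)] x(2) wd by simp
    qed
    then show "sub T' w = empty_table \<or> d \<in> Pi_dec (sub T' w)" by (simp add: Pi_Rows)
  qed
  have nd: "nondet_tree k T' \<Gamma>" unfolding nondet_tree_def using kt at cov dec by simp
  have "psi_tree \<psi> \<Gamma> \<le> n"
  proof (rule psi_tree_le[OF kt], intro ballI allI impI)
    fix t w d assume t: "t \<in> set \<Gamma>" "path_of t w d"
    then obtain \<alpha> where a: "\<alpha> \<in> U" "t = chain \<alpha> (to_nat \<alpha>)" unfolding \<Gamma>_def using xs(1) by auto
    then have "w = \<alpha>" using t(2) chain_path by simp
    then show "\<psi> (map fst w) \<le> n" using Om(2)[OF a(1)] by simp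
  qed
  then have pa: "psi_a \<psi> k T' \<le> n" using psi_a_le[OF ne' nd, of \<psi>] by simp
  obtain \<Gamma>d where dt: "det_tree k T' \<Gamma>d" and pd: "psi_tree \<psi> \<Gamma>d = psi_d \<psi> k T'"
    using det_opt[OF v' k ne'] by blast
  note dtt = dt[unfolded det_tree_def nondet_tree_def]
  have ktd: "k_tree k \<Gamma>d" and covd: "\<forall>row\<in>Rows T'. \<exists>t\<in>set \<Gamma>d. \<exists>w d. path_of t w d \<and> row \<in> Rows (sub T' w)"
    and decd: "\<forall>t\<in>set \<Gamma>d. \<forall>w d. path_of t w d \<longrightarrow> sub T' w = empty_table \<or> d \<in> Pi_dec (sub T' w)"
    and l1: "length \<Gamma>d = 1" and dsd: "\<forall>t\<in>set \<Gamma>d. det_sub t"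
    using dtt by simp_all
  obtain t where td: "\<Gamma>d = [t]" using l1 by (cases \<Gamma>d) auto
  have wft: "wf_sub k t" using ktd td unfolding k_tree_def by simp
  have dst: "det_sub t" using dsd td by simp
  have lens: "\<forall>w d. path_of t w d \<longrightarrow> length w \<le> psi_d \<psi> k T'"
  proof (intro allI impI)
    fix w d assume p: "path_of t w d"
    have "length (map fst w) \<le> \<psi> (map fst w)" using bcm unfolding bounded_complexity_measure_def by blast
    moreover have "\<psi> (map fst w) \<le> psi_tree \<psi> \<Gamma>d" by (rule psi_tree_ge[OF ktd _ p]) (simp add: td)
    ultimately show "length w \<le> psi_d \<psi> k T'" using pd by simp
  qed
  have cd: "card {d. \<exists>w. path_of t w d} \<le> k ^ psi_d \<psi> k T'" by (rule count_dec[OF wft dst lens k])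
  have fd: "finite {d. \<exists>w. path_of t w d}"
  proof -
    have "{d. \<exists>w. path_of t w d} \<subseteq> snd ` {(w,d). path_of t w d}" by force
    then show ?thesis using wf_path_fin[OF wft] finite_subset by blast
  qed
  have sub: "to_nat ` U \<subseteq> {d. \<exists>w. path_of t w d}"
  proof
    fix y assume "y \<in> to_nat ` U"
    then obtain \<alpha> where a: "\<alpha> \<in> U" "y = to_nat \<alpha>" by blast
    have "U - {\<alpha>} \<subset> U" using a(1) by blast
    then have nc: "\<not> is_cover \<psi> k T n (U - {\<alpha>})" using irr unfolding irred_cover_def by blast
    have "(\<Union>\<beta>\<in>U - {\<alpha>}. Rows (sub T \<beta>)) \<noteq> Rows T"
      using nc finU UOm unfolding is_cover_def by auto
    moreover have "(\<Union>\<beta>\<in>U - {\<alpha>}. Rows (sub T \<beta>)) \<subseteq> Rows T" by (rule UN_least) (simp add: Rows_sub)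
    ultimately obtain x where x: "x \<in> Rows T" "x \<notin> (\<Union>\<beta>\<in>U - {\<alpha>}. Rows (sub T \<beta>))" by blast
    have only: "\<beta> = \<alpha>" if "\<beta> \<in> U" "row_matches (fst T) (fst x) \<beta>" for \<beta>
    proof (rule ccontr)
      assume "\<beta> \<noteq> \<alpha>"
      moreover have "x \<in> Rows (sub T \<beta>)" using x(1) that(2) by (simp add: Rows_sub)
      ultimately show False using x(2) that(1) by blast
    qed
    have "x \<in> Rows (sub T \<alpha>)"
    proof -
      obtain \<beta> where "\<beta> \<in> U" "x \<in> Rows (sub T \<beta>)" using Uc x(1) by blast
      moreover then have "\<beta> = \<alpha>" using only by (simp add: Rows_sub)
      ultimately show ?thesis by simp
    qed
    then have xm: "row_matches (fst T) (fst x) \<alpha>" by (simp add: Rows_sub)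
    have "{\<beta>\<in>U. row_matches (fst T) (fst x) \<beta>} = {\<alpha>}" using only xm a(1) by blast
    then have nux: "\<nu> (fst x) = {to_nat \<alpha>}" unfolding \<nu>_def Let_def by simp
    have "(fst x, \<nu> (fst x)) \<in> Rows T'" unfolding rowsT' using x(1) by blast
    then obtain t' w d where tw: "t' \<in> set \<Gamma>d" "path_of t' w d" "(fst x, \<nu> (fst x)) \<in> Rows (sub T' w)"
      using covd by blast
    have "sub T' w \<noteq> empty_table" using tw(3) sub_empty_iff by blast
    then have "d \<in> Pi_dec (sub T' w)" using decd tw(1,2) by blast
    then have "d \<in> \<nu> (fst x)" using tw(3) unfolding Pi_Rows by force
    then have "d = y" using nux a(2) by simp
    then show "y \<in> {d. \<exists>w. path_of t w d}" using tw(1,2) td by auto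
  qed
  have "card U = card (to_nat ` U)" by (simp add: card_image)
  also have "\<dots> \<le> card {d. \<exists>w. path_of t w d}" by (rule card_mono[OF fd sub])
  also have "\<dots> \<le> k ^ psi_d \<psi> k T'" by (rule cd)
  finally show ?thesis using T'A ne' pa by blast
qed

theorem theorem1:
  fixes \<psi> :: "nat list \<Rightarrow> nat" and k :: nat and A :: "table set"
  assumes "bounded_complexity_measure \<psi>"
    and "k \<ge> 2"
    and "closed_class k A"
    and "nontrivial_class A"
  shows "(\<forall>n. H_defined \<psi> k A n) \<longleftrightarrow> (\<forall>n. L_defined \<psi> k A n)"
proof -
  note bcm = assms(1)
  have k: "0 < k" using assms(2) by simp
  have AM: "A \<subseteq> M_inf k" using assms(3) unfolding closed_class_def by simp
  show ?thesis
  proof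
    assume H: "\<forall>n. H_defined \<psi> k A n"
    show "\<forall>n. L_defined \<psi> k A n"
    proof
      fix n
      define F where "F = {psi_d \<psi> k T | T. T \<in> A \<and> psi_a \<psi> k T \<le> n}"
      have finF: "finite F" using H unfolding H_defined_def F_def by blast
      define B where "B = Max F"
      have bound: "l_psi \<psi> k T n \<le> k ^ B" if TA: "T \<in> A" for T
      proof (cases "T = empty_table")
        case True then show ?thesis unfolding l_psi_def by simp
      next
        case False
        obtain U where U: "irred_cover \<psi> k T n U" "card U = l_psi \<psi> k T n"
          using l_psi_attained[OF bcm False] by blast
        obtain T' where T': "T' \<in> A" "T' \<noteq> empty_table" "psi_a \<psi> k T' \<le> n" "card U \<le> k ^ psi_d \<psi> k T'"
          using dir2[OF bcm k assms(3) TA False U(1)] by blast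
        have "psi_d \<psi> k T' \<in> F" unfolding F_def using T'(1,3) by blast
        then have "psi_d \<psi> k T' \<le> B" unfolding B_def using finF by (simp add: Max_ge)
        then have "k ^ psi_d \<psi> k T' \<le> k ^ B" using k by (simp add: power_increasing)
        then show ?thesis using U(2) T'(4) by simp
      qed
      have "{l_psi \<psi> k T n | T. T \<in> A} \<subseteq> {..k ^ B}" using bound by blast
      then show "L_defined \<psi> k A n" unfolding L_defined_def by (rule finite_subset) simp
    qed
  next
    assume L: "\<forall>n. L_defined \<psi> k A n"
    show "\<forall>n. H_defined \<psi> k A n"
    proof
      fix n
      define F where "F = {l_psi \<psi> k T n | T. T \<in> A}"
      have finF: "finite F" using L unfolding L_defined_def F_def by blast
      define B where "B = Max F"
      have bound: "psi_d \<psi> k T \<le> B * n" if TA: "T \<in> A" and pa: "psi_a \<psi> k T \<le> n" for T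
      proof (cases "T = empty_table")
        case True then show ?thesis unfolding psi_d_def by simp
      next
        case False
        have v: "valid_table k T" using TA AM unfolding M_inf_def by blast
        have "l_psi \<psi> k T n \<in> F" unfolding F_def using TA by blast
        then have lB: "l_psi \<psi> k T n \<le> B" unfolding B_def using finF by (simp add: Max_ge)
        have lb: "card U \<le> B" if "irred_cover \<psi> k T n U" for U
          using l_psi_ge[OF bcm False that] lB by simp
        show ?thesis by (rule dir1[OF bcm k v False pa lb])
      qed
      have "{psi_d \<psi> k T | T. T \<in> A \<and> psi_a \<psi> k T \<le> n} \<subseteq> {..B * n}" using bound by blast
      then show "H_defined \<psi> k A n" unfolding H_defined_def by (rule finite_subset) simp
    qed
  qed
qed

end
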